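(* Let $\sigma:\mathbb{R}\to\mathbb{R}$ be a continuous discriminatory function and $n\ge1$. For every continuous function $f:[0,1]^n\to\mathbb{R}$ and every $\epsilon>0$ there exist a positive integer $k$, a matrix $\mathbf{W}=[\mathbf{w}_1|\cdots|\mathbf{w}_{kn}]=[\mathbf{W}_1|\cdots|\mathbf{W}_k]\in\mathbb{R}^{n\times kn}$ in which every $n\times n$ block $\mathbf{W}_i$ is a Toeplitz matrix, and real numbers $\alpha_j,\theta_j$ ($j=1,\dots,kn$) such that $G(\mathbf{x})=\sum_{j=1}^{kn}\alpha_j\sigma(\mathbf{w}_j^T\mathbf{x}+\theta_j)$ satisfies $\max_{\mathbf{x}\in[0,1]^n}|G(\mathbf{x})-f(\mathbf{x})|<\epsilon$. The same holds with "Toeplitz" replaced by "circulant".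
   Context: A function $\sigma:\mathbb{R}\to\mathbb{R}$ is discriminatory if the zero measure is the only finite signed regular Borel measure $\mu$ on $[0,1]^n$ with $\int_{[0,1]^n}\sigma(\mathbf{w}^T\mathbf{x}+\theta)\,d\mu(\mathbf{x})=0$ for all $\mathbf{w}\in\mathbb{R}^n,\theta\in\mathbb{R}$. A Toeplitz matrix is one with constant diagonals ($M_{ij}$ depends only on $i-j$); a circulant matrix is one where $M_{ij}$ depends only on $(i-j)\bmod n$. $\mathbf{w}_j$ is the $j$-th column of $\mathbf{W}$. *)

theory Defs
  imports "HOL-Analysis.Analysis"
begin

definition unit_cube :: "(real^'n::finite) set" where
  "unit_cube = cbox 0 1"

text \<open>A finite signed Borel measure on the cube is represented by its Jordan
decomposition mu = M1 - M2 with M1, M2 finite (positive) Borel measures on the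
cube (on a compact metric space every finite Borel measure is regular).
sigma is discriminatory iff mu = 0 is the only such measure annihilating all
ridge functions sigma(w.x + theta).\<close>
definition discriminatory :: "(real \<Rightarrow> real) \<Rightarrow> ('n::finite) itself \<Rightarrow> bool" where
  "discriminatory \<sigma> _ \<longleftrightarrow>
    (\<forall>(M1::(real^'n) measure) (M2::(real^'n) measure).
       sets M1 = sets (restrict_space borel unit_cube) \<and>
       sets M2 = sets (restrict_space borel unit_cube) \<and>
       finite_measure M1 \<and> finite_measure M2 \<and>
       (\<forall>(w::real^'n) (\<theta>::real).
          (\<integral>x. \<sigma> (w \<bullet> x + \<theta>) \<partial>M1) = (\<integral>x. \<sigma> (w \<bullet> x + \<theta>) \<partial>M2))
       \<longrightarrow> (\<forall>A\<in>sets M1. measure M1 A = measure M2 A))"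

text \<open>Position (0-based) of an index in the linear order of the index type;
this identifies 'n with {0,...,n-1}.\<close>
definition idx_pos :: "'n::{finite,linorder} \<Rightarrow> int" where
  "idx_pos i = int (card {j. j < i})"

definition toeplitz :: "real^('n::{finite,linorder})^('n::{finite,linorder}) \<Rightarrow> bool" where
  "toeplitz M \<longleftrightarrow> (\<forall>i j i' j'. idx_pos i - idx_pos j = idx_pos i' - idx_pos j'
                        \<longrightarrow> M $ i $ j = M $ i' $ j')"

definition circulant :: "real^('n::{finite,linorder})^('n::{finite,linorder}) \<Rightarrow> bool" where
  "circulant M \<longleftrightarrow> (\<forall>i j i' j'.
      (idx_pos i - idx_pos j) mod int CARD('n) = (idx_pos i' - idx_pos j') mod int CARD('n)
      \<longrightarrow> M $ i $ j = M $ i' $ j')"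

text \<open>The network with blocks W 0,...,W (k-1); column c of block i is w_j.\<close>
definition block_net ::
  "(real \<Rightarrow> real) \<Rightarrow> nat \<Rightarrow> (nat \<Rightarrow> real^'n^'n) \<Rightarrow> (nat \<Rightarrow> 'n \<Rightarrow> real)
     \<Rightarrow> (nat \<Rightarrow> 'n \<Rightarrow> real) \<Rightarrow> real^'n::finite \<Rightarrow> real" where
  "block_net \<sigma> k W \<alpha> \<theta> x =
     (\<Sum>i<k. \<Sum>c\<in>UNIV. \<alpha> i c * \<sigma> (column c (W i) \<bullet> x + \<theta> i c))"

end

theory Submission
  imports Defs
begin


definition r1 :: "(real\<Rightarrow>real) \<Rightarrow> (real\<times>real\<times>real) list \<Rightarrow> real \<Rightarrow> real" where
  "r1 \<sigma> L t = (\<Sum>(\<alpha>,a,b)\<leftarrow>L. \<alpha> * \<sigma>(a*t+b))"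

definition apx :: "(real\<Rightarrow>real) \<Rightarrow> real \<Rightarrow> real \<Rightarrow> (real\<Rightarrow>real) \<Rightarrow> bool" where
  "apx \<sigma> c d g \<longleftrightarrow> (\<forall>e>0. \<exists>L. \<forall>t\<in>{c..d}. \<bar>g t - r1 \<sigma> L t\<bar> < e)"

lemma r1_append: "r1 \<sigma> (L1@L2) t = r1 \<sigma> L1 t + r1 \<sigma> L2 t"
  by (simp add: r1_def)

lemma r1_scale: "r1 \<sigma> (map (\<lambda>p. (k * fst p, snd p)) L) t = k * r1 \<sigma> L t"
  by (induction L) (auto simp: r1_def algebra_simps split: prod.splits)

lemma apx_basic: "apx \<sigma> c d (\<lambda>t. \<sigma>(a*t+b))"
  unfolding apx_def by (intro allI impI exI[of _ "[(1,a,b)]"]) (simp add: r1_def)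

lemma apx_add:
  assumes "apx \<sigma> c d f" "apx \<sigma> c d g"
  shows "apx \<sigma> c d (\<lambda>t. f t + g t)"
  unfolding apx_def
proof (intro allI impI)
  fix e :: real assume e: "e > 0"
  obtain L1 where L1: "\<forall>t\<in>{c..d}. \<bar>f t - r1 \<sigma> L1 t\<bar> < e/2" using assms(1) e unfolding apx_def by (meson half_gt_zero)
  obtain L2 where L2: "\<forall>t\<in>{c..d}. \<bar>g t - r1 \<sigma> L2 t\<bar> < e/2" using assms(2) e unfolding apx_def by (meson half_gt_zero)
  show "\<exists>L. \<forall>t\<in>{c..d}. \<bar>f t + g t - r1 \<sigma> L t\<bar> < e"
  proof (intro exI ballI)
    fix t assume t: "t \<in> {c..d}"
    have "\<bar>f t + g t - r1 \<sigma> (L1@L2) t\<bar> \<le> \<bar>f t - r1 \<sigma> L1 t\<bar> + \<bar>g t - r1 \<sigma> L2 t\<bar>"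
      by (simp add: r1_append)
    then show "\<bar>f t + g t - r1 \<sigma> (L1@L2) t\<bar> < e" using L1 L2 t by fastforce
  qed
qed

lemma apx_cmult:
  assumes "apx \<sigma> c d f"
  shows "apx \<sigma> c d (\<lambda>t. k * f t)"
  unfolding apx_def
proof (intro allI impI)
  fix e :: real assume e: "e > 0"
  have e': "e / (\<bar>k\<bar>+1) > 0" using e by simp
  obtain L where L: "\<forall>t\<in>{c..d}. \<bar>f t - r1 \<sigma> L t\<bar> < e/(\<bar>k\<bar>+1)" using assms e' unfolding apx_def by blast
  show "\<exists>L. \<forall>t\<in>{c..d}. \<bar>k * f t - r1 \<sigma> L t\<bar> < e"
  proof (intro exI ballI)
    fix t assume t: "t \<in> {c..d}"
    have "\<bar>k * f t - r1 \<sigma> (map (\<lambda>p. (k * fst p, snd p)) L) t\<bar> = \<bar>k\<bar> * \<bar>f t - r1 \<sigma> L t\<bar>"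
      by (simp add: r1_scale abs_mult[symmetric] right_diff_distrib)
    also have "\<dots> \<le> (\<bar>k\<bar>+1) * \<bar>f t - r1 \<sigma> L t\<bar>" by (simp add: mult_right_mono)
    also have "\<dots> < (\<bar>k\<bar>+1) * (e/(\<bar>k\<bar>+1))"
      using L t by (intro mult_strict_left_mono) auto
    also have "\<dots> = e" by simp
    finally show "\<bar>k * f t - r1 \<sigma> (map (\<lambda>p. (k * fst p, snd p)) L) t\<bar> < e" .
  qed
qed

lemma apx_zero: "apx \<sigma> c d (\<lambda>t. 0)"
  unfolding apx_def by (intro allI impI exI[of _ "[]"]) (simp add: r1_def)

lemma apx_sum:
  fixes N :: nat
  assumes "\<And>i. i < N \<Longrightarrow> apx \<sigma> c d (f i)"
  shows "apx \<sigma> c d (\<lambda>t. \<Sum>i<N. f i t)"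
  using assms
proof (induction N)
  case 0 then show ?case by (simp add: apx_zero)
next
  case (Suc N)
  then show ?case by (simp add: apx_add)
qed

lemma apx_ext:
  assumes "apx \<sigma> c d f" "\<And>t. t \<in> {c..d} \<Longrightarrow> f t = g t"
  shows "apx \<sigma> c d g"
  using assms unfolding apx_def by simp

lemma apx_lim:
  assumes "\<And>e. e > 0 \<Longrightarrow> \<exists>h. apx \<sigma> c d h \<and> (\<forall>t\<in>{c..d}. \<bar>g t - h t\<bar> \<le> e)"
  shows "apx \<sigma> c d g"
  unfolding apx_def
proof (intro allI impI)
  fix e :: real assume e: "e > 0"
  obtain h where h: "apx \<sigma> c d h" "\<forall>t\<in>{c..d}. \<bar>g t - h t\<bar> \<le> e/2" using assms[of "e/2"] e by auto
  obtain L where L: "\<forall>t\<in>{c..d}. \<bar>h t - r1 \<sigma> L t\<bar> < e/2" using h(1) e unfolding apx_def by (meson half_gt_zero)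
  show "\<exists>L. \<forall>t\<in>{c..d}. \<bar>g t - r1 \<sigma> L t\<bar> < e"
  proof (intro exI ballI)
    fix t assume t: "t \<in> {c..d}"
    have "\<bar>g t - r1 \<sigma> L t\<bar> \<le> \<bar>g t - h t\<bar> + \<bar>h t - r1 \<sigma> L t\<bar>" by simp
    then show "\<bar>g t - r1 \<sigma> L t\<bar> < e" using h(2) L t by fastforce
  qed
qed



lemma lin_est:
  fixes F f :: "real \<Rightarrow> real"
  assumes der: "\<And>z. (F has_real_derivative f z) (at z)"
    and bnd: "\<And>z. z \<in> closed_segment x y \<Longrightarrow> \<bar>f z - f x\<bar> \<le> \<eta>"
  shows "\<bar>F y - F x - (y - x) * f x\<bar> \<le> \<eta> * \<bar>y - x\<bar>"
proof -
  define G where "G z = F z - z * f x" for z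
  have dG: "(G has_field_derivative (f z - f x)) (at z within closed_segment x y)" for z
  proof -
    have "(G has_real_derivative (f z - 1 * f x)) (at z)"
      unfolding G_def by (rule DERIV_diff[OF der DERIV_cmult_right[OF DERIV_ident]])
    then show ?thesis by (simp add: has_field_derivative_at_within)
  qed
  have "norm (G y - G x) \<le> \<eta> * norm (y - x)"
  proof (rule field_differentiable_bound[OF convex_closed_segment dG])
    show "\<And>z. z \<in> closed_segment x y \<Longrightarrow> norm (f z - f x) \<le> \<eta>" using bnd by simp
  qed auto
  then show ?thesis unfolding G_def by (simp add: algebra_simps)
qed

lemma seg_bounds:
  fixes x y z :: real
  assumes "z \<in> closed_segment x y"
  shows "\<bar>z - x\<bar> \<le> \<bar>y - x\<bar>" "\<bar>z\<bar> \<le> max \<bar>x\<bar> \<bar>y\<bar>"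
proof -
  have "x \<le> z \<and> z \<le> y \<or> y \<le> z \<and> z \<le> x"
    using assms by (cases "x \<le> y") (auto simp: closed_segment_eq_real_ivl)
  then show "\<bar>z - x\<bar> \<le> \<bar>y - x\<bar>" "\<bar>z\<bar> \<le> max \<bar>x\<bar> \<bar>y\<bar>" by linarith+
qed
lemma uc_bound:
  fixes \<tau> :: "real \<Rightarrow> real"
  assumes ct: "continuous_on UNIV \<tau>" and eta: "\<eta> > 0"
  obtains \<rho> where "\<rho> > 0" "\<And>x z. \<bar>x\<bar> \<le> R \<Longrightarrow> \<bar>z\<bar> \<le> R \<Longrightarrow> \<bar>z - x\<bar> \<le> \<rho> \<Longrightarrow> \<bar>\<tau> z - \<tau> x\<bar> \<le> \<eta>"
proof -
  have "uniformly_continuous_on {-R..R} \<tau>"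
    by (rule compact_uniformly_continuous) (auto intro: continuous_on_subset[OF ct])
  from this[unfolded uniformly_continuous_on_def, rule_format, OF eta]
  obtain d where d: "d > 0" "\<forall>x\<in>{-R..R}. \<forall>x'\<in>{-R..R}. dist x' x < d \<longrightarrow> dist (\<tau> x') (\<tau> x) < \<eta>"
    by blast
  show ?thesis
  proof (rule that[of "d/2"])
    show "d/2 > 0" using d by simp
    fix x z :: real assume "\<bar>x\<bar> \<le> R" "\<bar>z\<bar> \<le> R" "\<bar>z - x\<bar> \<le> d/2"
    then have "x \<in> {-R..R}" "z \<in> {-R..R}" "dist z x < d" using d(1) by (auto simp: dist_real_def abs_le_iff)
    then have "dist (\<tau> z) (\<tau> x) < \<eta>" using d(2) by blast
    then show "\<bar>\<tau> z - \<tau> x\<bar> \<le> \<eta>" by (simp add: dist_real_def)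
  qed
qed

lemma riemann_est:
  fixes F \<tau> :: "real \<Rightarrow> real" and N :: nat and h \<delta> \<eta> s R :: real
  assumes der: "\<And>x. (F has_real_derivative \<tau> x) (at x)"
    and uc: "\<And>x z. \<bar>x\<bar> \<le> R \<Longrightarrow> \<bar>z\<bar> \<le> R \<Longrightarrow> \<bar>z - x\<bar> \<le> \<delta> \<Longrightarrow> \<bar>\<tau> z - \<tau> x\<bar> \<le> \<eta>"
    and N: "N > 0" and hN: "\<bar>h\<bar> \<le> real N * \<delta>" and s: "\<bar>s\<bar> + \<bar>h\<bar> \<le> R"
  shows "\<bar>(F (s+h) - F s) - (\<Sum>i<N. (h/N) * \<tau> (s + i*(h/N)))\<bar> \<le> \<eta> * \<bar>h\<bar>"
proof -
  define q where "q = h / N"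
  have Nq: "real N * q = h" using N by (simp add: q_def)
  have qd: "\<bar>q\<bar> \<le> \<delta>" using hN N by (simp add: q_def abs_divide divide_le_eq mult.commute)
  have tel: "F (s+h) - F s = (\<Sum>i<N. F (s + real (Suc i) * q) - F (s + real i * q))"
    using sum_lessThan_telescope[of "\<lambda>i. F (s + real i * q)" N] Nq by simp
  have termb: "\<bar>F (s + real (Suc i) * q) - F (s + real i * q) - q * \<tau> (s + i*q)\<bar> \<le> \<eta> * \<bar>q\<bar>"
    if i: "i < N" for i
  proof -
    have iq: "\<bar>real i * q\<bar> \<le> \<bar>h\<bar>" "\<bar>real (Suc i) * q\<bar> \<le> \<bar>h\<bar>"
    proof -
      have "\<bar>real i * q\<bar> = real i * \<bar>q\<bar>" by (simp add: abs_mult)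
      also have "\<dots> \<le> real N * \<bar>q\<bar>" using i by (intro mult_right_mono) auto
      also have "\<dots> = \<bar>h\<bar>" using Nq by (metis abs_mult abs_of_nat)
      finally show "\<bar>real i * q\<bar> \<le> \<bar>h\<bar>" .
      have "\<bar>real (Suc i) * q\<bar> = real (Suc i) * \<bar>q\<bar>" by (simp add: abs_mult)
      also have "\<dots> \<le> real N * \<bar>q\<bar>" using i by (intro mult_right_mono) auto
      also have "\<dots> = \<bar>h\<bar>" using Nq by (metis abs_mult abs_of_nat)
      finally show "\<bar>real (Suc i) * q\<bar> \<le> \<bar>h\<bar>" .
    qed
    let ?x = "s + real i * q" and ?y = "s + real (Suc i) * q"
    have x: "\<bar>?x\<bar> \<le> R" "\<bar>?y\<bar> \<le> R" using iq s by auto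
    have yx: "?y - ?x = q" by (simp add: algebra_simps)
    have "\<bar>F ?y - F ?x - (?y - ?x) * \<tau> ?x\<bar> \<le> \<eta> * \<bar>?y - ?x\<bar>"
    proof (rule lin_est[OF der])
      fix z assume z: "z \<in> closed_segment ?x ?y"
      show "\<bar>\<tau> z - \<tau> ?x\<bar> \<le> \<eta>"
      proof (rule uc)
        show "\<bar>z\<bar> \<le> R" using seg_bounds(2)[OF z] x by (simp add: max_def split: if_splits)
        show "\<bar>z - ?x\<bar> \<le> \<delta>" using seg_bounds(1)[OF z] yx qd by simp
      qed (use x in auto)
    qed
    then show ?thesis using yx by simp
  qed
  have "\<bar>(F (s+h) - F s) - (\<Sum>i<N. q * \<tau> (s + i*q))\<bar>
      = \<bar>\<Sum>i<N. (F (s + real (Suc i) * q) - F (s + real i * q) - q * \<tau> (s + i*q))\<bar>"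
    unfolding tel sum_subtractf[symmetric] by (rule refl)
  also have "\<dots> \<le> (\<Sum>i<N. \<bar>F (s + real (Suc i) * q) - F (s + real i * q) - q * \<tau> (s + i*q)\<bar>)"
    by (rule sum_abs)
  also have "\<dots> \<le> (\<Sum>i<N. \<eta> * \<bar>q\<bar>)" by (rule sum_mono) (use termb in auto)
  also have "\<dots> = \<eta> * (real N * \<bar>q\<bar>)" by simp
  also have "real N * \<bar>q\<bar> = \<bar>h\<bar>" using Nq by (metis abs_mult abs_of_nat)
  finally have "\<bar>(F (s+h) - F s) - (\<Sum>i<N. q * \<tau> (s + i*q))\<bar> \<le> \<eta> * \<bar>h\<bar>" .
  then show ?thesis by (simp only: q_def)
qed



lemma avg_step:
  fixes \<tau> F :: "real \<Rightarrow> real" and j :: nat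
  assumes P: "\<And>a b. apx \<sigma> c d (\<lambda>t. t^j * \<tau>(a*t+b))"
    and ct: "continuous_on UNIV \<tau>"
    and der: "\<And>x. (F has_real_derivative \<tau> x) (at x)"
  shows "apx \<sigma> c d (\<lambda>t. t^j * (F(a*t+b+h) - F(a*t+b)))"
proof (rule apx_lim)
  fix e :: real assume e: "e > 0"
  define M where "M = \<bar>c\<bar> + \<bar>d\<bar>"
  define R where "R = \<bar>a\<bar> * M + \<bar>b\<bar> + \<bar>h\<bar>"
  define C where "C = M^j"
  define \<eta> where "\<eta> = e / (C * \<bar>h\<bar> + 1)"
  have M0: "M \<ge> 0" by (simp add: M_def)
  have C0: "C \<ge> 0" by (simp add: C_def M0)
  have den: "C * \<bar>h\<bar> + 1 > 0" using C0 by (simp add: add_nonneg_pos)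
  have eta: "\<eta> > 0" using e den by (simp add: \<eta>_def)
  obtain \<rho> where rho: "\<rho> > 0" "\<And>x z. \<bar>x\<bar> \<le> R \<Longrightarrow> \<bar>z\<bar> \<le> R \<Longrightarrow> \<bar>z - x\<bar> \<le> \<rho> \<Longrightarrow> \<bar>\<tau> z - \<tau> x\<bar> \<le> \<eta>"
    using uc_bound[OF ct eta] by blast
  obtain N :: nat where N: "\<bar>h\<bar> / \<rho> < N" using reals_Archimedean2 by blast
  have "0 \<le> \<bar>h\<bar> / \<rho>" using rho by simp
  then have N0: "N > 0" using N by linarith
  have hN: "\<bar>h\<bar> \<le> real N * \<rho>" using N rho(1) by (simp add: pos_divide_less_eq less_imp_le)
  define q where "q = h / real N"
  define g where "g t = (\<Sum>i<N. q * (t^j * \<tau>(a*t + (b + real i * q))))" for t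
  show "\<exists>g'. apx \<sigma> c d g' \<and> (\<forall>t\<in>{c..d}. \<bar>t^j * (F(a*t+b+h) - F(a*t+b)) - g' t\<bar> \<le> e)"
  proof (intro exI conjI ballI)
    show "apx \<sigma> c d g" unfolding g_def by (intro apx_sum apx_cmult P)
    fix t assume t: "t \<in> {c..d}"
    have tM: "\<bar>t\<bar> \<le> M" using t by (auto simp: M_def)
    have at: "\<bar>a*t\<bar> \<le> \<bar>a\<bar>*M" by (simp add: abs_mult mult_left_mono tM)
    have s: "\<bar>a*t+b\<bar> + \<bar>h\<bar> \<le> R" unfolding R_def using at abs_triangle_ineq[of "a*t" b] by linarith
    have est: "\<bar>(F(a*t+b+h) - F (a*t+b)) - (\<Sum>i<N. (h/N) * \<tau>((a*t+b) + i*(h/N)))\<bar> \<le> \<eta>*\<bar>h\<bar>"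
      by (rule riemann_est[OF der rho(2) N0 hN s])
    have eq: "g t = t^j * (\<Sum>i<N. (h/N) * \<tau>((a*t+b) + i*(h/N)))"
      unfolding g_def q_def sum_distrib_left by (intro sum.cong refl) (simp add: algebra_simps)
    have "\<bar>t^j * (F(a*t+b+h) - F(a*t+b)) - g t\<bar>
        = \<bar>t\<bar>^j * \<bar>(F(a*t+b+h) - F (a*t+b)) - (\<Sum>i<N. (h/N) * \<tau>((a*t+b) + i*(h/N)))\<bar>"
      unfolding eq by (simp add: right_diff_distrib[symmetric] abs_mult power_abs)
    also have "\<dots> \<le> C * (\<eta>*\<bar>h\<bar>)"
      unfolding C_def by (intro mult_mono power_mono tM est) (auto simp: M0)
    also have "\<dots> = e * (C * \<bar>h\<bar>) / (C * \<bar>h\<bar> + 1)" by (simp add: \<eta>_def)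
    also have "\<dots> \<le> e" using den e by (simp add: divide_le_eq)
    finally show "\<bar>t^j * (F(a*t+b+h) - F(a*t+b)) - g t\<bar> \<le> e" .
  qed
qed

lemma deriv_step:
  fixes \<tau> \<tau>' :: "real \<Rightarrow> real" and j :: nat
  assumes P: "\<And>a b. apx \<sigma> c d (\<lambda>t. t^j * \<tau>(a*t+b))"
    and der: "\<And>x. (\<tau> has_real_derivative \<tau>' x) (at x)"
    and ct: "continuous_on UNIV \<tau>'"
  shows "apx \<sigma> c d (\<lambda>t. t^(Suc j) * \<tau>'(a*t+b))"
proof (rule apx_lim)
  fix e :: real assume e: "e > 0"
  define M where "M = \<bar>c\<bar> + \<bar>d\<bar>"
  define R where "R = \<bar>a\<bar> * M + \<bar>b\<bar> + M"
  define C where "C = M^(Suc j)"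
  define \<eta> where "\<eta> = e / (C + 1)"
  have M0: "M \<ge> 0" by (simp add: M_def)
  have C0: "C \<ge> 0" by (simp add: C_def M0)
  have eta: "\<eta> > 0" using e C0 by (simp add: \<eta>_def add_nonneg_pos)
  obtain \<rho> where rho: "\<rho> > 0" "\<And>x z. \<bar>x\<bar> \<le> R \<Longrightarrow> \<bar>z\<bar> \<le> R \<Longrightarrow> \<bar>z - x\<bar> \<le> \<rho> \<Longrightarrow> \<bar>\<tau>' z - \<tau>' x\<bar> \<le> \<eta>"
    using uc_bound[OF ct eta] by blast
  define \<delta> where "\<delta> = min 1 (\<rho>/(M+1))"
  have d0: "\<delta> > 0" using rho M0 by (simp add: \<delta>_def)
  have d1: "\<delta> \<le> 1" by (simp add: \<delta>_def)
  have dM: "\<delta> * M \<le> \<rho>"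
  proof -
    have "\<delta> * M \<le> (\<rho>/(M+1)) * M" by (intro mult_right_mono) (auto simp: \<delta>_def M0)
    also have "\<dots> \<le> (\<rho>/(M+1)) * (M+1)" using rho M0 by (intro mult_left_mono) auto
    also have "\<dots> = \<rho>" using M0 by simp
    finally show ?thesis .
  qed
  define g where "g t = (1/\<delta>) * (t^j * \<tau>((a+\<delta>)*t+b)) + (-(1/\<delta>)) * (t^j * \<tau>(a*t+b))" for t
  show "\<exists>g'. apx \<sigma> c d g' \<and> (\<forall>t\<in>{c..d}. \<bar>t^(Suc j) * \<tau>'(a*t+b) - g' t\<bar> \<le> e)"
  proof (intro exI conjI ballI)
    show "apx \<sigma> c d g" unfolding g_def by (intro apx_add apx_cmult P)
    fix t assume t: "t \<in> {c..d}"
    have tM: "\<bar>t\<bar> \<le> M" using t by (auto simp: M_def)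
    have at: "\<bar>a*t\<bar> \<le> \<bar>a\<bar>*M" by (simp add: abs_mult mult_left_mono tM)
    define x where "x = a*t+b"
    define y where "y = (a+\<delta>)*t+b"
    have yx: "y - x = \<delta> * t" by (simp add: x_def y_def algebra_simps)
    have dt: "\<bar>\<delta> * t\<bar> \<le> \<rho>"
    proof -
      have "\<bar>\<delta> * t\<bar> = \<delta> * \<bar>t\<bar>" using d0 by (simp add: abs_mult)
      also have "\<dots> \<le> \<delta> * M" using d0 tM by (intro mult_left_mono) auto
      finally show ?thesis using dM by linarith
    qed
    have dt1: "\<bar>\<delta> * t\<bar> \<le> M"
    proof -
      have "\<bar>\<delta> * t\<bar> = \<delta> * \<bar>t\<bar>" using d0 by (simp add: abs_mult)
      also have "\<dots> \<le> 1 * M" using d0 d1 tM by (intro mult_mono) auto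
      finally show ?thesis by simp
    qed
    have xR: "\<bar>x\<bar> \<le> \<bar>a\<bar> * M + \<bar>b\<bar>" unfolding x_def using at abs_triangle_ineq[of "a*t" b] by linarith
    have yR: "\<bar>y\<bar> \<le> R" unfolding R_def using xR yx dt1 by (smt (verit))
    have lin: "\<bar>\<tau> y - \<tau> x - (y - x) * \<tau>' x\<bar> \<le> \<eta> * \<bar>y - x\<bar>"
    proof (rule lin_est[OF der])
      fix z assume z: "z \<in> closed_segment x y"
      show "\<bar>\<tau>' z - \<tau>' x\<bar> \<le> \<eta>"
      proof (rule rho(2))
        show "\<bar>x\<bar> \<le> R" using xR M0 by (simp add: R_def)
        show "\<bar>z\<bar> \<le> R" using seg_bounds(2)[OF z] xR yR M0 by (simp add: R_def max_def split: if_splits)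
        show "\<bar>z - x\<bar> \<le> \<rho>" using seg_bounds(1)[OF z] yx dt by simp
      qed
    qed
    have eq: "t^(Suc j) * \<tau>'(a*t+b) - g t = -(t^j/\<delta>) * (\<tau> y - \<tau> x - (y - x) * \<tau>' x)"
      unfolding g_def yx using d0 by (simp add: x_def y_def field_simps)
    have "\<bar>t^(Suc j) * \<tau>'(a*t+b) - g t\<bar> = (\<bar>t\<bar>^j/\<delta>) * \<bar>\<tau> y - \<tau> x - (y - x) * \<tau>' x\<bar>"
      unfolding eq using d0 by (simp add: abs_mult power_abs)
    also have "\<dots> \<le> (\<bar>t\<bar>^j/\<delta>) * (\<eta> * \<bar>y - x\<bar>)" using lin d0 by (intro mult_left_mono) auto
    also have "\<dots> = \<bar>t\<bar>^(Suc j) * \<eta>" unfolding yx using d0 by (simp add: abs_mult)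
    also have "\<dots> \<le> C * \<eta>" unfolding C_def using eta tM by (intro mult_right_mono power_mono) auto
    also have "\<dots> = e * (C / (C + 1))" by (simp add: \<eta>_def)
    also have "\<dots> \<le> e * 1" using e C0 by (intro mult_left_mono) auto
    finally show "\<bar>t^(Suc j) * \<tau>'(a*t+b) - g t\<bar> \<le> e" by simp
  qed
qed



fun dlt :: "real \<Rightarrow> nat \<Rightarrow> (real\<Rightarrow>real) \<Rightarrow> real \<Rightarrow> real" where
  "dlt h 0 \<tau> = \<tau>"
| "dlt h (Suc k) \<tau> = (\<lambda>s. dlt h k \<tau> (s+h) - dlt h k \<tau> s)"

lemma cont_shift: "continuous_on UNIV f \<Longrightarrow> continuous_on UNIV (\<lambda>s::real. f (s+h))"
  by (rule continuous_on_compose2[of UNIV f UNIV "\<lambda>s. s+h"]) (auto intro: continuous_intros)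

lemma dlt_cont: "continuous_on UNIV \<tau> \<Longrightarrow> continuous_on UNIV (dlt h k \<tau>)"
proof (induction k)
  case 0 then show ?case by simp
next
  case (Suc k)
  then show ?case by (simp add: continuous_on_diff cont_shift)
qed

lemma dlt_P:
  assumes ct: "continuous_on UNIV \<sigma>"
  shows "apx \<sigma> c d (\<lambda>t. t^k * dlt h k \<sigma> (a*t+b))"
proof (induction k arbitrary: a b)
  case 0
  show ?case by (rule apx_ext[OF apx_basic]) simp
next
  case (Suc k)
  define \<tau> where "\<tau> = dlt h k \<sigma>"
  have cta: "continuous_on UNIV \<tau>" unfolding \<tau>_def by (rule dlt_cont[OF ct])
  obtain F where F: "\<And>x::real. - \<infinity> < ereal x \<Longrightarrow> ereal x < \<infinity> \<Longrightarrow> (F has_vector_derivative \<tau> x) (at x)"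
    using einterval_antiderivative[of "-\<infinity>" "\<infinity>" \<tau>] cta
    by (auto simp: continuous_on_eq_continuous_at)
  have der: "(F has_real_derivative \<tau> x) (at x)" for x
    using F[of x] by (simp add: has_real_derivative_iff_has_vector_derivative)
  define T where "T s = F (s+h) - F s" for s
  have PT: "apx \<sigma> c d (\<lambda>t. t^k * T(a*t+b))" for a b
    unfolding T_def by (rule avg_step[OF Suc.IH[folded \<tau>_def] cta der])
  have derT: "(T has_real_derivative dlt h (Suc k) \<sigma> x) (at x)" for x
  proof -
    have "((\<lambda>s. F (s+h)) has_real_derivative \<tau> (x+h)) (at x)"
      using DERIV_shift[of F "\<tau> (x+h)" x h] der[of "x+h"] by simp
    then show ?thesis unfolding T_def using der[of x] by (simp add: \<tau>_def DERIV_diff)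
  qed
  have ctT: "continuous_on UNIV (dlt h (Suc k) \<sigma>)" by (rule dlt_cont[OF ct])
  show ?case by (rule deriv_step[OF PT derT ctT])
qed

lemma monomial_apx:
  assumes ct: "continuous_on UNIV \<sigma>" and nz: "dlt h k \<sigma> b \<noteq> 0"
  shows "apx \<sigma> c d (\<lambda>t. t^k)"
proof -
  have "apx \<sigma> c d (\<lambda>t. (1 / dlt h k \<sigma> b) * (t^k * dlt h k \<sigma> (0*t+b)))"
    by (rule apx_cmult[OF dlt_P[OF ct]])
  then show ?thesis by (rule apx_ext) (use nz in simp)
qed



lemma dens1:
  assumes ct: "continuous_on UNIV \<sigma>" and nz: "\<And>k. \<exists>h b. dlt h k \<sigma> b \<noteq> 0"
    and g: "continuous_on {c..d} g"
  shows "apx \<sigma> c d g"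
proof (rule apx_lim)
  fix e :: real assume e: "e > 0"
  obtain p where p: "real_polynomial_function p" "\<And>x. x \<in> {c..d} \<Longrightarrow> \<bar>g x - p x\<bar> < e"
    using Stone_Weierstrass_real_polynomial_function[OF compact_Icc g e] by blast
  obtain a n where pa: "p = (\<lambda>x. \<Sum>i\<le>n. a i * x^i)"
    using p(1) real_polynomial_function_iff_sum by blast
  have mono: "apx \<sigma> c d (\<lambda>t. t^i)" for i
    using nz[of i] monomial_apx[OF ct] by blast
  have "apx \<sigma> c d (\<lambda>t. \<Sum>i<Suc n. a i * t^i)"
    by (intro apx_sum apx_cmult mono)
  then have "apx \<sigma> c d p" unfolding pa by (simp add: lessThan_Suc_atMost)
  then show "\<exists>h. apx \<sigma> c d h \<and> (\<forall>t\<in>{c..d}. \<bar>g t - h t\<bar> \<le> e)"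
    using p(2) by (intro exI[of _ p]) (auto intro: less_imp_le)
qed

lemma dlt_formula:
  "dlt h k \<tau> s = (\<Sum>S\<in>Pow {..<k}. (-1)^(k - card S) * \<tau>(s + real (card S) * h))"
proof (induction k arbitrary: s)
  case 0 then show ?case by simp
next
  case (Suc k)
  have split: "Pow {..<Suc k} = Pow {..<k} \<union> insert k ` Pow {..<k}"
    by (simp add: lessThan_Suc Pow_insert)
  have disj: "Pow {..<k} \<inter> insert k ` Pow {..<k} = {}" by auto
  have inj: "inj_on (insert k) (Pow {..<k})"
    unfolding inj_on_def by (metis Pow_iff insert_ident lessThan_iff less_irrefl subsetD)
  define f where "f S = (-1::real)^(Suc k - card S) * \<tau>(s + real (card S) * h)" for S :: "nat set"
  have A: "f S = - ((-1)^(k - card S) * \<tau>(s + real (card S) * h))" if "S \<in> Pow {..<k}" for S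
  proof -
    have "card S \<le> k" using that card_mono[of "{..<k}" S] by auto
    then have "Suc k - card S = Suc (k - card S)" by (simp add: Suc_diff_le)
    then show ?thesis by (simp add: f_def)
  qed
  have B: "f (insert k S) = (-1)^(k - card S) * \<tau>((s+h) + real (card S) * h)" if "S \<in> Pow {..<k}" for S
  proof -
    have "finite S" "k \<notin> S" using that finite_subset[of S "{..<k}"] by auto
    then have "card (insert k S) = Suc (card S)" by simp
    then show ?thesis by (simp add: f_def algebra_simps)
  qed
  have "(\<Sum>S\<in>Pow {..<Suc k}. f S) = (\<Sum>S\<in>Pow {..<k}. f S) + (\<Sum>S\<in>insert k ` Pow {..<k}. f S)"
    unfolding split by (rule sum.union_disjoint) (use disj in auto)
  also have "(\<Sum>S\<in>insert k ` Pow {..<k}. f S) = (\<Sum>S\<in>Pow {..<k}. f (insert k S))"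
    by (rule sum.reindex[OF inj, unfolded comp_def])
  also have "\<dots> = dlt h k \<tau> (s+h)" unfolding Suc.IH by (rule sum.cong) (auto simp: B)
  also have "(\<Sum>S\<in>Pow {..<k}. f S) = - dlt h k \<tau> s" unfolding Suc.IH
    by (simp add: A sum_negf[symmetric])
  finally show ?case by (simp add: f_def)
qed



lemma sum_sign_split:
  fixes g :: "nat set \<Rightarrow> real"
  shows "(\<Sum>S\<in>Pow {..<k}. (-1)^(k - card S) * g S)
       = (\<Sum>S\<in>{S\<in>Pow {..<k}. even (k - card S)}. g S) - (\<Sum>S\<in>{S\<in>Pow {..<k}. odd (k - card S)}. g S)"
proof -
  have fin: "finite (Pow {..<k::nat})" by simp
  have "(\<Sum>S\<in>Pow {..<k}. (-1)^(k - card S) * g S)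
      = (\<Sum>S\<in>{S\<in>Pow {..<k}. even (k - card S)}. (-1)^(k - card S) * g S)
       + (\<Sum>S\<in>{S\<in>Pow {..<k}. \<not> even (k - card S)}. (-1)^(k - card S) * g S)"
  proof -
    define A where "A = {S\<in>Pow {..<k}. even (k - card S)}"
    define B where "B = {S\<in>Pow {..<k}. \<not> even (k - card S)}"
    have AB: "A \<union> B = Pow {..<k}" by (auto simp: A_def B_def)
    have "(\<Sum>S\<in>A \<union> B. (-1)^(k - card S) * g S) = (\<Sum>S\<in>A. (-1)^(k - card S) * g S) + (\<Sum>S\<in>B. (-1)^(k - card S) * g S)"
      by (rule sum.union_disjoint) (auto simp: A_def B_def)
    then show ?thesis unfolding AB by (simp add: A_def B_def)
  qed
  also have "(\<Sum>S\<in>{S\<in>Pow {..<k}. even (k - card S)}. (-1)^(k - card S) * g S)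
      = (\<Sum>S\<in>{S\<in>Pow {..<k}. even (k - card S)}. g S)" by (rule sum.cong) auto
  also have "(\<Sum>S\<in>{S\<in>Pow {..<k}. \<not> even (k - card S)}. (-1)^(k - card S) * g S)
      = - (\<Sum>S\<in>{S\<in>Pow {..<k}. odd (k - card S)}. g S)" by (simp add: sum_negf[symmetric])
  finally show ?thesis by simp
qed

lemma disc_nz:
  fixes \<sigma> :: "real \<Rightarrow> real" and k :: nat
  assumes ct: "continuous_on UNIV \<sigma>" and disc: "discriminatory \<sigma> TYPE('n::{finite,linorder})"
  shows "\<exists>h b. dlt h k \<sigma> b \<noteq> 0"
proof (rule ccontr)
  assume "\<not> ?thesis"
  then have z: "\<And>h b. dlt h k \<sigma> b = 0" by blast
  define i0 where "i0 = (undefined :: 'n::{finite,linorder})"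
  define e where "e = (axis i0 1 :: real^'n::{finite,linorder})"
  define pt where "pt S = (real (card S) / real k) *\<^sub>R e" for S :: "nat set"
  define I1 where "I1 = {S\<in>Pow {..<k}. even (k - card S)}"
  define I2 where "I2 = {S\<in>Pow {..<k}. odd (k - card S)}"
  define N where "N = restrict_space borel (unit_cube :: (real^'n::{finite,linorder}) set)"
  define M1 where "M1 = distr (count_space I1) N pt"
  define M2 where "M2 = distr (count_space I2) N pt"
  have fin1: "finite I1" and fin2: "finite I2" by (auto simp: I1_def I2_def)
  have spN: "space N = unit_cube" by (simp add: N_def space_restrict_space)
  have cube_borel: "(unit_cube :: (real^'n::{finite,linorder}) set) \<in> sets borel"
    unfolding unit_cube_def by (simp add: borel_closed)
  have ptc: "pt S \<in> unit_cube" if "S \<in> Pow {..<k}" for S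
  proof -
    have "card S \<le> k" using that card_mono[of "{..<k}" S] by auto
    then have "real (card S) / real k \<le> 1" by (cases "k = 0") auto
    then show ?thesis unfolding unit_cube_def mem_box_cart(2)
      by (auto simp: pt_def e_def axis_def)
  qed
  have meas1: "pt \<in> count_space I1 \<rightarrow>\<^sub>M N" and meas2: "pt \<in> count_space I2 \<rightarrow>\<^sub>M N"
    using ptc by (auto simp: spN I1_def I2_def)
  have sets1: "sets M1 = sets (restrict_space borel unit_cube)"
    and sets2: "sets M2 = sets (restrict_space borel unit_cube)"
    by (simp_all add: M1_def M2_def N_def)
  have fm1: "finite_measure M1" unfolding M1_def
    by (rule finite_measure.finite_measure_distr[OF finite_measure_count_space[OF fin1] meas1])
  have fm2: "finite_measure M2" unfolding M2_def
    by (rule finite_measure.finite_measure_distr[OF finite_measure_count_space[OF fin2] meas2])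
  have ip: "w \<bullet> pt S = real (card S) * (w $ i0 / real k)" for w :: "real^'n::{finite,linorder}" and S
    by (simp add: pt_def e_def inner_axis)
  have integ: "(\<integral>x. \<sigma> (w \<bullet> x + \<theta>) \<partial>M1) = (\<integral>x. \<sigma> (w \<bullet> x + \<theta>) \<partial>M2)" for w :: "real^'n::{finite,linorder}" and \<theta>
  proof -
    have bm: "(\<lambda>x. \<sigma> (w \<bullet> x + \<theta>)) \<in> borel_measurable N"
    proof -
      have "continuous_on UNIV (\<lambda>x::real^'n::{finite,linorder}. \<sigma> (w \<bullet> x + \<theta>))"
        by (rule continuous_on_compose2[OF ct]) (auto intro!: continuous_intros)
      then have "(\<lambda>x::real^'n::{finite,linorder}. \<sigma> (w \<bullet> x + \<theta>)) \<in> borel_measurable borel"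
        by (rule borel_measurable_continuous_onI)
      then show ?thesis unfolding N_def by (rule measurable_restrict_space1)
    qed
    define h where "h = w $ i0 / real k"
    have "(\<integral>x. \<sigma> (w \<bullet> x + \<theta>) \<partial>M1) - (\<integral>x. \<sigma> (w \<bullet> x + \<theta>) \<partial>M2)
        = (\<Sum>S\<in>I1. \<sigma> (\<theta> + real (card S) * h)) - (\<Sum>S\<in>I2. \<sigma> (\<theta> + real (card S) * h))"
      unfolding M1_def M2_def integral_distr[OF meas1 bm] integral_distr[OF meas2 bm]
        lebesgue_integral_count_space_finite[OF fin1] lebesgue_integral_count_space_finite[OF fin2]
      by (simp add: ip h_def add.commute)
    also have "\<dots> = dlt h k \<sigma> \<theta>"
      unfolding dlt_formula sum_sign_split I1_def I2_def by simp
    also have "\<dots> = 0" by (rule z)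
    finally show ?thesis by simp
  qed
  have eq: "\<forall>A\<in>sets M1. measure M1 A = measure M2 A"
    using disc unfolding discriminatory_def using sets1 sets2 fm1 fm2 integ by blast
  define A where "A = {pt {..<k}}"
  have AN: "A \<in> sets N"
  proof -
    have "A \<subseteq> unit_cube" using ptc[of "{..<k}"] by (simp add: A_def)
    moreover have "A \<in> sets borel" by (simp add: A_def)
    ultimately show ?thesis unfolding N_def using cube_borel by (subst sets_restrict_space_iff) auto
  qed
  have e0: "e \<noteq> 0" by (simp add: e_def)
  have pre: "pt S = pt {..<k} \<longleftrightarrow> S = {..<k}" if S: "S \<in> Pow {..<k}" for S
  proof
    assume "pt S = pt {..<k}"
    then have "real (card S) / real k = real (card {..<k}) / real k" using e0 by (simp add: pt_def)
    then have "card S = k \<or> k = 0" by (auto simp: divide_cancel_right)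
    then show "S = {..<k}"
    proof
      assume "card S = k"
      then show ?thesis using S by (intro card_subset_eq) auto
    next
      assume "k = 0" then show ?thesis using S by auto
    qed
  qed simp
  have p1: "pt -` A \<inter> I1 = {{..<k}}" using pre by (auto simp: A_def I1_def)
  have p2: "pt -` A \<inter> I2 = {}" using pre by (auto simp: A_def I2_def)
  have kI1: "{..<k} \<in> I1" by (simp add: I1_def)
  have "measure M1 A = 1" unfolding M1_def measure_distr[OF meas1 AN] using p1 kI1 by (simp add: measure_count_space)
  moreover have "measure M2 A = 0" unfolding M2_def measure_distr[OF meas2 AN] using p2 by simp
  moreover have "A \<in> sets M1" using AN by (simp add: M1_def)
  ultimately show False using eq by auto
qed



definition expsum :: "(real \<times> (real^'n)) list \<Rightarrow> real^'n \<Rightarrow> real" where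
  "expsum L x = sum_list (map (\<lambda>p. fst p * exp (snd p \<bullet> x)) L)"

definition rn :: "(real\<Rightarrow>real) \<Rightarrow> (real \<times> (real^'n) \<times> real) list \<Rightarrow> real^'n \<Rightarrow> real" where
  "rn \<sigma> L x = sum_list (map (\<lambda>p. fst p * \<sigma> (fst (snd p) \<bullet> x + snd (snd p))) L)"

definition prodL :: "(real \<times> (real^'n)) list \<Rightarrow> (real \<times> (real^'n)) list \<Rightarrow> (real \<times> (real^'n)) list" where
  "prodL L1 L2 = concat (map (\<lambda>p. map (\<lambda>q. (fst p * fst q, snd p + snd q)) L2) L1)"

lemma expsum_append: "expsum (L1 @ L2) x = expsum L1 x + expsum L2 x"
  by (simp add: expsum_def)

lemma rn_append: "rn \<sigma> (L1 @ L2) x = rn \<sigma> L1 x + rn \<sigma> L2 x"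
  by (simp add: rn_def)

lemma expsum_map: "expsum (map (\<lambda>q. (a * fst q, v + snd q)) L2) x = a * exp (v \<bullet> x) * expsum L2 x"
  by (induction L2) (simp_all add: expsum_def exp_add inner_add_left algebra_simps)

lemma expsum_prodL: "expsum (prodL L1 L2) x = expsum L1 x * expsum L2 x"
proof (induction L1)
  case Nil then show ?case by (simp add: prodL_def expsum_def)
next
  case (Cons p L1)
  have "prodL (p # L1) L2 = map (\<lambda>q. (fst p * fst q, snd p + snd q)) L2 @ prodL L1 L2"
    by (simp add: prodL_def)
  then show ?case using Cons by (simp add: expsum_append expsum_map) (simp add: expsum_def algebra_simps)
qed

lemma expsum_cont: "continuous_on S (expsum L)"
proof (induction L)
  case Nil then show ?case by (simp add: expsum_def)
next
  case (Cons p L)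
  have eq: "expsum (p # L) = (\<lambda>x. fst p * exp (snd p \<bullet> x) + expsum L x)"
    by (simp add: expsum_def fun_eq_iff)
  show ?case unfolding eq by (intro continuous_intros Cons)
qed

lemma ER_ring: "function_ring_on {f. \<exists>L. f = expsum L} (unit_cube :: (real^'n) set)"
proof unfold_locales
  show "compact (unit_cube :: (real^'n) set)" by (simp add: unit_cube_def)
next
  fix f :: "real^'n \<Rightarrow> real" assume "f \<in> {f. \<exists>L. f = expsum L}"
  then show "continuous_on unit_cube f" using expsum_cont by blast
next
  fix f g :: "real^'n \<Rightarrow> real" assume "f \<in> {f. \<exists>L. f = expsum L}" "g \<in> {f. \<exists>L. f = expsum L}"
  then obtain L1 L2 where "f = expsum L1" "g = expsum L2" by blast
  then show "(\<lambda>x. f x + g x) \<in> {f. \<exists>L. f = expsum L}"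
    by (auto intro!: exI[of _ "L1 @ L2"] simp: fun_eq_iff expsum_append)
  from \<open>f = expsum L1\<close> \<open>g = expsum L2\<close> show "(\<lambda>x. f x * g x) \<in> {f. \<exists>L. f = expsum L}"
    by (auto intro!: exI[of _ "prodL L1 L2"] simp: fun_eq_iff expsum_prodL)
next
  fix c :: real
  show "(\<lambda>_. c) \<in> {f. \<exists>L. f = (expsum L :: real^'n \<Rightarrow> real)}"
    by (auto intro!: exI[of _ "[(c,0)]"] simp: fun_eq_iff expsum_def)
next
  fix x y :: "real^'n" assume "x \<noteq> y"
  then have "(x - y) \<bullet> (x - y) \<noteq> 0" by simp
  then have "(x - y) \<bullet> x \<noteq> (x - y) \<bullet> y" by (simp add: inner_diff_right)
  then have "expsum [(1, x - y)] x \<noteq> expsum [(1, x - y)] y" by (simp add: expsum_def)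
  then show "\<exists>f\<in>{f. \<exists>L. f = expsum L}. f x \<noteq> f y" by blast
qed

lemma exp_term:
  fixes \<sigma> :: "real \<Rightarrow> real" and w :: "real^'n"
  assumes dens: "\<And>c d g. continuous_on {c..d} g \<Longrightarrow> apx \<sigma> c d g" and e: "e > 0"
  shows "\<exists>L. \<forall>x\<in>unit_cube. \<bar>a * exp (w \<bullet> x) - rn \<sigma> L x\<bar> < e"
proof -
  obtain K where K: "\<And>x::real^'n. x \<in> unit_cube \<Longrightarrow> norm x \<le> K"
    using bounded_cbox unfolding unit_cube_def bounded_iff by blast
  define B where "B = norm w * K"
  have wB: "\<bar>w \<bullet> x\<bar> \<le> B" if "x \<in> unit_cube" for x
  proof -
    have "\<bar>w \<bullet> x\<bar> \<le> norm w * norm x" by (rule Cauchy_Schwarz_ineq2)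
    also have "\<dots> \<le> norm w * K" using K[OF that] by (intro mult_left_mono) auto
    finally show ?thesis by (simp add: B_def)
  qed
  define \<eta> where "\<eta> = e / (\<bar>a\<bar> + 1)"
  have eta: "\<eta> > 0" using e by (simp add: \<eta>_def add_nonneg_pos)
  have "apx \<sigma> (-B) B exp" by (rule dens) (auto intro: continuous_intros)
  then obtain L1 where L1: "\<And>s. s \<in> {-B..B} \<Longrightarrow> \<bar>exp s - r1 \<sigma> L1 s\<bar> < \<eta>"
    unfolding apx_def using eta by blast
  define L where "L = map (\<lambda>p. (a * fst p, fst (snd p) *\<^sub>R w, snd (snd p))) L1"
  have rnL: "rn \<sigma> L x = a * r1 \<sigma> L1 (w \<bullet> x)" for x
    unfolding L_def rn_def r1_def
    by (induction L1) (auto simp: algebra_simps split: prod.splits)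
  show ?thesis
  proof (intro exI ballI)
    fix x :: "real^'n" assume x: "x \<in> unit_cube"
    have s: "\<bar>exp (w \<bullet> x) - r1 \<sigma> L1 (w \<bullet> x)\<bar> < \<eta>" using wB[OF x] by (intro L1) auto
    have "\<bar>a * exp (w \<bullet> x) - rn \<sigma> L x\<bar> = \<bar>a\<bar> * \<bar>exp (w \<bullet> x) - r1 \<sigma> L1 (w \<bullet> x)\<bar>"
      unfolding rnL by (simp add: abs_mult[symmetric] right_diff_distrib)
    also have "\<dots> \<le> \<bar>a\<bar> * \<eta>" using s by (intro mult_left_mono) auto
    also have "\<dots> < (\<bar>a\<bar> + 1) * \<eta>" using eta by simp
    also have "\<dots> = e" by (simp add: \<eta>_def)
    finally show "\<bar>a * exp (w \<bullet> x) - rn \<sigma> L x\<bar> < e" .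
  qed
qed

lemma expsum_approx:
  fixes \<sigma> :: "real \<Rightarrow> real" and L :: "(real \<times> (real^'n)) list"
  assumes dens: "\<And>c d g. continuous_on {c..d} g \<Longrightarrow> apx \<sigma> c d g"
  shows "e > 0 \<Longrightarrow> \<exists>L'. \<forall>x\<in>unit_cube. \<bar>expsum L x - rn \<sigma> L' x\<bar> < e"
proof (induction L arbitrary: e)
  case Nil
  show ?case by (intro exI[of _ "[]"]) (simp add: expsum_def rn_def Nil)
next
  case (Cons p L)
  have e2: "e/2 > 0" using Cons.prems by simp
  obtain La where La: "\<forall>x\<in>unit_cube. \<bar>fst p * exp (snd p \<bullet> x) - rn \<sigma> La x\<bar> < e/2"
    using exp_term[OF dens e2] by blast
  obtain Lb where Lb: "\<forall>x\<in>unit_cube. \<bar>expsum L x - rn \<sigma> Lb x\<bar> < e/2"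
    using Cons.IH[OF e2] by blast
  show ?case
  proof (intro exI ballI)
    fix x :: "real^'n" assume x: "x \<in> unit_cube"
    have "expsum (p # L) x - rn \<sigma> (La @ Lb) x = (fst p * exp (snd p \<bullet> x) - rn \<sigma> La x) + (expsum L x - rn \<sigma> Lb x)"
      by (simp add: rn_append expsum_def)
    moreover have "\<bar>fst p * exp (snd p \<bullet> x) - rn \<sigma> La x\<bar> < e/2" using La x by blast
    moreover have "\<bar>expsum L x - rn \<sigma> Lb x\<bar> < e/2" using Lb x by blast
    ultimately show "\<bar>expsum (p # L) x - rn \<sigma> (La @ Lb) x\<bar> < e" by linarith
  qed
qed

lemma main_approx:
  fixes \<sigma> :: "real \<Rightarrow> real" and f :: "real^('n::{finite,linorder}) \<Rightarrow> real"
  assumes ct: "continuous_on UNIV \<sigma>" and disc: "discriminatory \<sigma> TYPE('n::{finite,linorder})"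
    and f: "continuous_on unit_cube f" and e: "e > 0"
  shows "\<exists>L. \<forall>x\<in>unit_cube. \<bar>f x - rn \<sigma> L x\<bar> < e"
proof -
  have dens: "apx \<sigma> c d g" if "continuous_on {c..d} g" for c d g
    by (rule dens1[OF ct disc_nz[OF ct disc] that])
  interpret ER: function_ring_on "{f. \<exists>L. f = expsum L}" "unit_cube :: (real^'n::{finite,linorder}) set"
    by (rule ER_ring)
  have e2: "e/2 > 0" using e by simp
  obtain g where g: "g \<in> {f. \<exists>L. f = expsum L}" "\<forall>x\<in>unit_cube. \<bar>f x - g x\<bar> < e/2"
    using ER.Stone_Weierstrass_basic[OF f e2] by blast
  then obtain L where gL: "g = expsum L" by blast
  obtain L' where L': "\<forall>x\<in>unit_cube. \<bar>expsum L x - rn \<sigma> L' x\<bar> < e/2"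
    using expsum_approx[OF dens e2] by blast
  show ?thesis
  proof (intro exI ballI)
    fix x :: "real^'n::{finite,linorder}" assume x: "x \<in> unit_cube"
    have "\<bar>f x - rn \<sigma> L' x\<bar> \<le> \<bar>f x - g x\<bar> + \<bar>expsum L x - rn \<sigma> L' x\<bar>" using gL by simp
    then show "\<bar>f x - rn \<sigma> L' x\<bar> < e" using g(2) L' x by fastforce
  qed
qed



definition ipn :: "'n::{finite,linorder} \<Rightarrow> nat" where "ipn i = card {j. j < i}"

lemma idx_pos_ipn: "idx_pos i = int (ipn i)"
  by (simp add: idx_pos_def ipn_def)

lemma ipn_less: "i < j \<Longrightarrow> ipn i < ipn (j::'n::{finite,linorder})"
  unfolding ipn_def by (rule psubset_card_mono) auto

lemma ipn_inj: "inj (ipn :: 'n::{finite,linorder} \<Rightarrow> nat)"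
proof (rule injI)
  fix x y :: 'n assume "ipn x = ipn y"
  then show "x = y" using ipn_less[of x y] ipn_less[of y x] by (metis less_irrefl linorder_neqE)
qed

lemma ipn_bound: "ipn (i::'n::{finite,linorder}) < CARD('n)"
  unfolding ipn_def by (rule psubset_card_mono) auto

lemma ipn_image: "range (ipn :: 'n::{finite,linorder} \<Rightarrow> nat) = {..<CARD('n)}"
proof (rule card_subset_eq)
  show "range (ipn :: 'n \<Rightarrow> nat) \<subseteq> {..<CARD('n)}" using ipn_bound by auto
  show "card (range (ipn :: 'n \<Rightarrow> nat)) = card {..<CARD('n)}"
    using card_image[OF ipn_inj] by simp
qed simp

definition circ :: "real^('n::{finite,linorder}) \<Rightarrow> real^('n::{finite,linorder})^('n::{finite,linorder})" where
  "circ v = (\<chi> r c. v $ inv ipn (nat ((idx_pos r - idx_pos c) mod int CARD('n))))"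

lemma circ_circulant: "circulant (circ v)"
  unfolding circulant_def circ_def by simp

lemma circulant_toeplitz: "circulant M \<Longrightarrow> toeplitz M"
  unfolding circulant_def toeplitz_def by metis

definition c0 :: "'n::{finite,linorder}" where "c0 = inv ipn 0"

lemma ipn_c0: "ipn (c0 :: 'n::{finite,linorder}) = 0"
proof -
  have "0 \<in> range (ipn :: 'n \<Rightarrow> nat)" unfolding ipn_image by simp
  then show ?thesis unfolding c0_def by (rule f_inv_into_f)
qed

lemma column_circ: "column c0 (circ v) = v"
proof -
  have "(circ v) $ r $ c0 = v $ r" for r
  proof -
    have "(idx_pos r - idx_pos (c0::'a)) mod int CARD('a) = int (ipn r)"
      using ipn_bound[of r] by (simp add: idx_pos_ipn ipn_c0)
    then show ?thesis by (simp add: circ_def inv_f_f[OF ipn_inj])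
  qed
  then show ?thesis by (simp add: column_def vec_eq_iff)
qed

lemma final_circ:
  fixes \<sigma> :: "real \<Rightarrow> real" and f :: "real^('n::{finite,linorder}) \<Rightarrow> real"
  assumes ct: "continuous_on UNIV \<sigma>" and disc: "discriminatory \<sigma> TYPE('n::{finite,linorder})"
    and f: "continuous_on unit_cube f" and e: "\<epsilon> > 0"
  shows "\<exists>k W \<alpha> \<theta>. k > 0 \<and> (\<forall>i<k. circulant (W i)) \<and>
              (\<forall>x\<in>unit_cube. \<bar>block_net \<sigma> k W \<alpha> \<theta> x - f x\<bar> < \<epsilon>)"
proof -
  obtain L where L: "\<forall>x\<in>unit_cube. \<bar>f x - rn \<sigma> L x\<bar> < \<epsilon>"
    using main_approx[OF ct disc f e] by blast
  define k where "k = Suc (length L)"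
  define W where "W i = circ (fst (snd (L ! i)))" for i
  define \<alpha> where "\<alpha> i c = (if c = c0 then (if i < length L then fst (L ! i) else 0) else 0)" for i and c :: "'n::{finite,linorder}"
  define \<theta> where "\<theta> i (c::'n::{finite,linorder}) = snd (snd (L ! i))" for i c
  have bn: "block_net \<sigma> k W \<alpha> \<theta> x = rn \<sigma> L x" for x
  proof -
    have inner: "(\<Sum>c\<in>UNIV. \<alpha> i c * \<sigma> (column c (W i) \<bullet> x + \<theta> i c))
        = (if i < length L then fst (L ! i) * \<sigma> (fst (snd (L ! i)) \<bullet> x + snd (snd (L ! i))) else 0)" for i
    proof -
      have "(\<Sum>c\<in>UNIV. \<alpha> i c * \<sigma> (column c (W i) \<bullet> x + \<theta> i c))
          = (\<Sum>c\<in>UNIV. if c = (c0::'n::{finite,linorder}) then \<alpha> i c0 * \<sigma> (column c0 (W i) \<bullet> x + \<theta> i c0) else 0)"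
        by (rule sum.cong) (auto simp: \<alpha>_def)
      also have "\<dots> = \<alpha> i c0 * \<sigma> (column c0 (W i) \<bullet> x + \<theta> i c0)" by simp
      finally show ?thesis by (simp add: \<alpha>_def W_def \<theta>_def column_circ)
    qed
    have "block_net \<sigma> k W \<alpha> \<theta> x = (\<Sum>i<Suc (length L). if i < length L then fst (L ! i) * \<sigma> (fst (snd (L ! i)) \<bullet> x + snd (snd (L ! i))) else 0)"
      unfolding block_net_def k_def inner by simp
    also have "\<dots> = (\<Sum>i<length L. fst (L ! i) * \<sigma> (fst (snd (L ! i)) \<bullet> x + snd (snd (L ! i))))"
      by simp
    also have "\<dots> = rn \<sigma> L x"
      unfolding rn_def sum_list_sum_nth by (simp add: atLeast0LessThan)
    finally show ?thesis .
  qed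
  show ?thesis
  proof (intro exI conjI allI impI ballI)
    show "k > 0" by (simp add: k_def)
    fix i show "circulant (W i)" by (simp add: W_def circ_circulant)
  next
    fix x :: "real^('n::{finite,linorder})" assume "x \<in> unit_cube"
    then show "\<bar>block_net \<sigma> k W \<alpha> \<theta> x - f x\<bar> < \<epsilon>" using L bn by (simp add: abs_minus_commute)
  qed
qed

theorem corollary1:
  fixes \<sigma> :: "real \<Rightarrow> real"
  assumes "continuous_on UNIV \<sigma>"
    and "discriminatory \<sigma> TYPE('n::{finite,linorder})"
  shows "(\<forall>(f::real^('n::{finite,linorder}) \<Rightarrow> real) (\<epsilon>::real). continuous_on unit_cube f \<and> \<epsilon> > 0 \<longrightarrow>
           (\<exists>k W \<alpha> \<theta>. k > 0 \<and> (\<forall>i<k. toeplitz (W i)) \<and>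
              (\<forall>x\<in>unit_cube. \<bar>block_net \<sigma> k W \<alpha> \<theta> x - f x\<bar> < \<epsilon>)))
       \<and> (\<forall>(f::real^('n::{finite,linorder}) \<Rightarrow> real) (\<epsilon>::real). continuous_on unit_cube f \<and> \<epsilon> > 0 \<longrightarrow>
           (\<exists>k W \<alpha> \<theta>. k > 0 \<and> (\<forall>i<k. circulant (W i)) \<and>
              (\<forall>x\<in>unit_cube. \<bar>block_net \<sigma> k W \<alpha> \<theta> x - f x\<bar> < \<epsilon>)))"
proof (intro conjI allI impI)
  fix f :: "real^('n::{finite,linorder}) \<Rightarrow> real" and \<epsilon> :: real
  assume h: "continuous_on unit_cube f \<and> \<epsilon> > 0"
  from final_circ[OF assms, of f \<epsilon>] h
  obtain k W \<alpha> \<theta> where "k > 0" "\<forall>i<k. circulant (W i)"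
      "\<forall>x\<in>unit_cube. \<bar>block_net \<sigma> k W \<alpha> \<theta> x - f x\<bar> < \<epsilon>" by blast
  then show "\<exists>k W \<alpha> \<theta>. k > 0 \<and> (\<forall>i<k. toeplitz (W i)) \<and>
              (\<forall>x\<in>unit_cube. \<bar>block_net \<sigma> k W \<alpha> \<theta> x - f x\<bar> < \<epsilon>)"
    using circulant_toeplitz by blast
next
  fix f :: "real^('n::{finite,linorder}) \<Rightarrow> real" and \<epsilon> :: real
  assume h: "continuous_on unit_cube f \<and> \<epsilon> > 0"
  then show "\<exists>k W \<alpha> \<theta>. k > 0 \<and> (\<forall>i<k. circulant (W i)) \<and>
              (\<forall>x\<in>unit_cube. \<bar>block_net \<sigma> k W \<alpha> \<theta> x - f x\<bar> < \<epsilon>)"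
    using final_circ[OF assms, of f \<epsilon>] by blast
qed

end
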